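(* Let $\mathcal{S}$ be the STAIR code with inside global parity symbols as defined in the context, so that every parity entry $X_{i_0,j_0}$ (with $(i_0,j_0)\in T$ or $j_0\ge n-m$) is a linear function $X_{i_0,j_0}=\sum c_{i,j}\,X_{i,j}$ of the entries at data positions $(i,j)$. Then $c_{i,j}\neq 0$ only if $i\le i_0$ and $j\le j_0$. Moreover, $c_{i,j}=0$ whenever $j\ne j_0$ and $h(j)=h(j_0)$ (columns spanned by the same tread), and $c_{i,j}=0$ whenever $i\ne i_0$ and $v(i)=v(i_0)$ (rows spanned by the same riser).
   Context: Parameters: integers $n,r,m,m'$ with $1\le m<n$, $1\le m'\le n-m$, and $\mathbf{e}=(e_0,\dots,e_{m'-1})$ with $0<e_0\le\cdots\le e_{m'-1}\le r$; $s=\sum_l e_l$. Field $\mathbb{F}=GF(2^w)$ with $n+m'\le 2^w$, $r+e_{m'-1}\le 2^w$. $\mathcal{C}_{row}$ is a systematic linear MDS $(n+m',n-m)$-code and $\mathcal{C}_{col}$ a systematic linear MDS $(r+e_{m'-1},r)$-code over $\mathbb{F}$ (length, dimension; systematic = codeword is the input symbols followed by parity symbols). Stair positions: $T=\{(i,\,n-m-m'+l): 0\le l\le m'-1,\ r-e_l\le i\le r-1\}$. Data positions: all $(i,j)$ with $j\le n-m-1$ and $(i,j)\notin T$. $\mathcal{S}$ is the set of $r\times n$ arrays $X$ over $\mathbb{F}$ for which there is an $r\times m'$ array $P'$ such that each row $(X_{i,0},\dots,X_{i,n-1},P'_{i,0},\dots,P'_{i,m'-1})$ is a codeword of $\mathcal{C}_{row}$,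 and for each $l$ the first $e_l$ of the $e_{m'-1}$ parity symbols of the $\mathcal{C}_{col}$-encoding of column $(P'_{0,l},\dots,P'_{r-1,l})$ are zero. The data entries determine $X\in\mathcal{S}$ uniquely and linearly. Define the parity height of column $j$: $h(j)=0$ for $j<n-m-m'$, $h(n-m-m'+l)=e_l$ for $0\le l\le m'-1$, and $h(j)=r$ for $j\ge n-m$. Define for row $i$: $v(i)=\#\{j: h(j)\ge r-i\}$, the number of parity positions in row $i$. *)

theory Defs
  imports Main
begin

definition vecs :: "nat \<Rightarrow> (nat \<Rightarrow> 'a::zero) set" where
  "vecs N = {v. \<forall>i\<ge>N. v i = 0}"

definition trunc :: "nat \<Rightarrow> (nat \<Rightarrow> 'a::zero) \<Rightarrow> nat \<Rightarrow> 'a" where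
  "trunc K v = (\<lambda>i. if i < K then v i else 0)"

definition linear_code :: "nat \<Rightarrow> (nat \<Rightarrow> 'a::field) set \<Rightarrow> bool" where
  "linear_code N C \<longleftrightarrow> C \<subseteq> vecs N \<and> (\<lambda>i. 0) \<in> C \<and>
     (\<forall>u\<in>C. \<forall>v\<in>C. (\<lambda>i. u i + v i) \<in> C) \<and>
     (\<forall>a. \<forall>v\<in>C. (\<lambda>i. a * v i) \<in> C)"

(* systematic linear (N,K)-code: every message of length K is the prefix of exactly
   one codeword (message symbols followed by N-K parity symbols); hence dimension K *)
definition systematic_code :: "nat \<Rightarrow> nat \<Rightarrow> (nat \<Rightarrow> 'a::field) set \<Rightarrow> bool" where
  "systematic_code N K C \<longleftrightarrow> linear_code N C \<and> K \<le> N \<and> bij_betw (trunc K) C (vecs K)"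

definition weight :: "nat \<Rightarrow> (nat \<Rightarrow> 'a::zero) \<Rightarrow> nat" where
  "weight N v = card {i. i < N \<and> v i \<noteq> 0}"

definition sys_MDS_code :: "nat \<Rightarrow> nat \<Rightarrow> (nat \<Rightarrow> 'a::field) set \<Rightarrow> bool" where
  "sys_MDS_code N K C \<longleftrightarrow> systematic_code N K C \<and>
     (\<forall>v\<in>C. v \<noteq> (\<lambda>i. 0) \<longrightarrow> N - K + 1 \<le> weight N v)"

definition stair_pos :: "nat \<Rightarrow> nat \<Rightarrow> nat \<Rightarrow> nat \<Rightarrow> (nat \<Rightarrow> nat) \<Rightarrow> (nat \<times> nat) set" where
  "stair_pos n r m m' e = {(i, j). \<exists>l. l < m' \<and> j = n - m - m' + l \<and> r - e l \<le> i \<and> i < r}"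

definition data_pos :: "nat \<Rightarrow> nat \<Rightarrow> nat \<Rightarrow> nat \<Rightarrow> (nat \<Rightarrow> nat) \<Rightarrow> (nat \<times> nat) set" where
  "data_pos n r m m' e = {(i, j). i < r \<and> j < n - m \<and> (i, j) \<notin> stair_pos n r m m' e}"

definition stair_code ::
  "nat \<Rightarrow> nat \<Rightarrow> nat \<Rightarrow> nat \<Rightarrow> (nat \<Rightarrow> nat) \<Rightarrow> (nat \<Rightarrow> 'a::field) set \<Rightarrow> (nat \<Rightarrow> 'a) set
     \<Rightarrow> (nat \<Rightarrow> nat \<Rightarrow> 'a) set" where
  "stair_code n r m m' e Crow Ccol =
    {X. (\<forall>i j. (r \<le> i \<or> n \<le> j) \<longrightarrow> X i j = 0) \<and>
        (\<exists>P'. (\<forall>i<r. (\<lambda>j. if j < n then X i j else if j < n + m' then P' i (j - n) else 0) \<in> Crow) \<and>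
              (\<forall>l<m'. \<exists>c\<in>Ccol. (\<forall>i<r. c i = P' i l) \<and> (\<forall>k<e l. c (r + k) = 0)))}"

definition par_height :: "nat \<Rightarrow> nat \<Rightarrow> nat \<Rightarrow> nat \<Rightarrow> (nat \<Rightarrow> nat) \<Rightarrow> nat \<Rightarrow> nat" where
  "par_height n r m m' e j =
     (if j < n - m - m' then 0 else if j < n - m then e (j - (n - m - m')) else r)"

definition row_par :: "nat \<Rightarrow> nat \<Rightarrow> nat \<Rightarrow> nat \<Rightarrow> (nat \<Rightarrow> nat) \<Rightarrow> nat \<Rightarrow> nat" where
  "row_par n r m m' e i = card {j. j < n \<and> r - i \<le> par_height n r m m' e j}"

end

theory Submission
  imports Defs "HOL-Library.FuncSet"
begin

lemma lin_add: "linear_code N C \<Longrightarrow> u \<in> C \<Longrightarrow> v \<in> C \<Longrightarrow> (\<lambda>i. u i + v i) \<in> C"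
  unfolding linear_code_def by blast

lemma lin_smult: "linear_code N C \<Longrightarrow> v \<in> C \<Longrightarrow> (\<lambda>i. a * v i) \<in> C"
  unfolding linear_code_def by blast

lemma lin_zero: "linear_code N C \<Longrightarrow> (\<lambda>i. 0) \<in> C"
  unfolding linear_code_def by blast

lemma lin_diff: assumes "linear_code N C" "u \<in> C" "v \<in> C" shows "(\<lambda>i. u i - v i) \<in> C"
proof -
  have "(\<lambda>i. (-1) * v i) \<in> C" using lin_smult[OF assms(1,3)] .
  from lin_add[OF assms(1,2) this] show ?thesis by simp
qed

lemma lin_sum:
  assumes "linear_code N C" "finite I" "\<forall>i\<in>I. f i \<in> C"
  shows "(\<lambda>t. \<Sum>i\<in>I. f i t) \<in> C"
  using assms(2,3)
proof (induction I rule: finite_induct)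
  case empty then show ?case using lin_zero[OF assms(1)] by simp
next
  case (insert x F)
  then have "(\<lambda>t. f x t + (\<Sum>i\<in>F. f i t)) \<in> C" using lin_add[OF assms(1)] by auto
  then show ?case using insert by simp
qed

lemma lin_comb:
  assumes "linear_code N C" "finite I" "\<forall>i\<in>I. f i \<in> C"
  shows "(\<lambda>t. \<Sum>i\<in>I. a i * f i t) \<in> C"
  using lin_sum[OF assms(1,2), of "\<lambda>i t. a i * f i t"] lin_smult[OF assms(1)] assms(3) by auto

lemma sys_lin: "sys_MDS_code N K C \<Longrightarrow> linear_code N C"
  unfolding sys_MDS_code_def systematic_code_def by auto

lemma mds_zero:
  assumes "sys_MDS_code N K C" "v \<in> C" "P \<subseteq> {..<N}" "K \<le> card P" "\<forall>p\<in>P. v p = 0"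
  shows "v = (\<lambda>i. 0)"
proof (rule ccontr)
  assume ne: "v \<noteq> (\<lambda>i. 0)"
  have A: "systematic_code N K C" and B: "\<forall>v\<in>C. v \<noteq> (\<lambda>i. 0) \<longrightarrow> N - K + 1 \<le> weight N v"
    using assms(1) unfolding sys_MDS_code_def by blast+
  from A have KN: "K \<le> N" unfolding systematic_code_def by blast
  from B ne assms(2) have w: "N - K + 1 \<le> weight N v" by blast
  have "{i. i<N \<and> v i \<noteq> 0} \<subseteq> {..<N} - P" using assms(5) by auto
  hence "weight N v \<le> card ({..<N} - P)" unfolding weight_def by (intro card_mono) auto
  also have "\<dots> = N - card P" using assms(3) by (simp add: card_Diff_subset finite_subset)
  finally have "weight N v \<le> N - card P" .
  moreover have "card P \<le> N" using card_mono[OF finite_lessThan assms(3)] by simp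
  ultimately show False using w assms(4) KN by linarith
qed

lemma mds_unique:
  assumes "sys_MDS_code N K C" "u \<in> C" "v \<in> C" "P \<subseteq> {..<N}" "K \<le> card P" "\<forall>p\<in>P. u p = v p"
  shows "u = v"
proof -
  have d: "(\<lambda>i. u i - v i) \<in> C" using lin_diff[OF sys_lin[OF assms(1)] assms(2,3)] .
  have z: "\<forall>p\<in>P. u p - v p = 0" using assms(6) by simp
  have "(\<lambda>i. u i - v i) = (\<lambda>i. 0)" by (rule mds_zero[OF assms(1) d assms(4,5)]) (use z in simp)
  then show ?thesis by (simp add: fun_eq_iff)
qed

lemma vecs_bij: "bij_betw (\<lambda>v. restrict v {..<K}) (vecs K :: (nat \<Rightarrow> 'a::zero) set) (Pi\<^sub>E {..<K} (\<lambda>_. UNIV))"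
  apply (rule bij_betw_byWitness[where f'="\<lambda>g i. if i < K then g i else 0"])
  subgoal unfolding vecs_def by (intro ballI ext) (simp add: not_less)
  subgoal apply (intro ballI ext) subgoal for a i by (cases "i < K") (simp_all add: PiE_def extensional_def) done
  subgoal unfolding image_subset_iff by (simp add: restrict_PiE_iff)
  subgoal unfolding vecs_def image_subset_iff by simp
  done

lemma mds_interp:
  fixes C :: "(nat \<Rightarrow> 'a::{field,finite}) set"
  assumes "sys_MDS_code N K C" "P \<subseteq> {..<N}" "card P = K"
  shows "\<exists>v\<in>C. \<forall>p\<in>P. v p = f p"
proof -
  have bij: "bij_betw (trunc K) C (vecs K)" using assms(1)
    unfolding sys_MDS_code_def systematic_code_def by auto
  have vb: "bij_betw (\<lambda>v. restrict v {..<K}) (vecs K :: (nat\<Rightarrow>'a) set) (Pi\<^sub>E {..<K} (\<lambda>_. UNIV))"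
    by (rule vecs_bij)
  have finV: "finite (vecs K :: (nat \<Rightarrow> 'a) set)"
    using bij_betw_finite[OF vb] finite_PiE[of "{..<K}" "\<lambda>_. UNIV::'a set"] by simp
  have cardV: "card (vecs K :: (nat \<Rightarrow> 'a) set) = card (UNIV::'a set) ^ K"
    using bij_betw_same_card[OF vb] by (simp add: card_PiE)
  have finC: "finite C" using bij_betw_finite[OF bij] finV by simp
  have cardC: "card C = card (UNIV::'a set) ^ K" using bij_betw_same_card[OF bij] cardV by simp
  have finP: "finite P" using assms(2) finite_subset by blast
  define \<rho> where "\<rho> = (\<lambda>v::nat \<Rightarrow> 'a. restrict v P)"
  have inj: "inj_on \<rho> C"
  proof (rule inj_onI)
    fix u v assume uv: "u \<in> C" "v \<in> C" "\<rho> u = \<rho> v"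
    have "\<forall>p\<in>P. u p = v p" using uv(3) unfolding \<rho>_def by (metis restrict_apply')
    then show "u = v" using mds_unique[OF assms(1) uv(1,2) assms(2)] assms(3) by simp
  qed
  have sub: "\<rho> ` C \<subseteq> Pi\<^sub>E P (\<lambda>_. UNIV)" unfolding \<rho>_def by auto
  have "card (\<rho> ` C) = card (Pi\<^sub>E P (\<lambda>_. UNIV :: 'a set))"
    using card_image[OF inj] cardC by (simp add: card_PiE finP assms(3))
  hence eq: "\<rho> ` C = Pi\<^sub>E P (\<lambda>_. UNIV)"
    using card_subset_eq[OF finite_PiE[OF finP] sub] by simp
  have "restrict f P \<in> Pi\<^sub>E P (\<lambda>_. UNIV)" by simp
  then obtain v where "v \<in> C" "\<rho> v = restrict f P" using eq by (metis imageE)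
  then show ?thesis unfolding \<rho>_def by (metis restrict_apply')
qed

locale stair =
  fixes n r m m' :: nat and e :: "nat \<Rightarrow> nat" and Crow Ccol :: "(nat \<Rightarrow> 'a::{field,finite}) set"
  assumes m'_pos: "1 \<le> m'" and m'_le: "m' \<le> n - m"
    and e_mono: "\<And>l1 l2. l1 \<le> l2 \<Longrightarrow> l2 < m' \<Longrightarrow> e l1 \<le> e l2"
    and e_le: "e (m' - 1) \<le> r"
    and Crow: "sys_MDS_code (n + m') (n - m) Crow"
    and Ccol: "sys_MDS_code (r + e (m' - 1)) r Ccol"
begin

abbreviation "D \<equiv> data_pos n r m m' e"
abbreviation "s0 \<equiv> n - m - m'"
abbreviation "E \<equiv> e (m' - 1)"

lemma mm_le: "m + m' \<le> n" using m'_le m'_pos by arith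

lemma e_le_E: "l < m' \<Longrightarrow> e l \<le> E" using e_mono[of l "m'-1"] by simp
lemma e_le_r: "l < m' \<Longrightarrow> e l \<le> r" using e_le_E e_le by (meson le_trans)

lemma D_iff: "(i,j) \<in> D \<longleftrightarrow> i < r \<and> j < n - m \<and> \<not>(\<exists>l<m'. j = s0 + l \<and> r - e l \<le> i)"
  unfolding data_pos_def stair_pos_def by blast

lemma stair_col_D: assumes "l < m'" "i < r - e l" shows "(i, s0 + l) \<in> D"
proof -
  have "i < r" using assms by linarith
  moreover have "s0 + l < n - m" using assms(1) mm_le by linarith
  moreover have "\<not>(\<exists>la<m'. s0 + l = s0 + la \<and> r - e la \<le> i)" using assms(2) by auto
  ultimately show ?thesis unfolding D_iff by blast
qed

lemma pure_col_D: "j < s0 \<Longrightarrow> i < r \<Longrightarrow> (i,j) \<in> D"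
  unfolding D_iff using m'_le by auto

lemma D_fin: "finite D"
proof -
  have "D \<subseteq> {..<r} \<times> {..<n}" unfolding data_pos_def by auto
  then show ?thesis using finite_subset by blast
qed

definition L where "L t = {l. l < m' \<and> r - e l \<le> t}"
definition Q where "Q t = {j. (t,j) \<in> D} \<union> (\<lambda>l. n + l) ` L t"

lemma Q_sub: "Q t \<subseteq> {..<n+m'}"
  unfolding Q_def L_def D_iff by auto

lemma card_Q: assumes t: "t < r" shows "card (Q t) = n - m"
proof -
  have fL: "finite (L t)" unfolding L_def by simp
  have Lsub: "L t \<subseteq> {..<m'}" unfolding L_def by auto
  have cL: "card (L t) \<le> m'" using card_mono[OF finite_lessThan Lsub] by simp
  have eq1: "{j. (t,j) \<in> D} = {..<n-m} - (\<lambda>l. s0 + l) ` L t"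
    unfolding D_iff L_def using t by auto
  have sub1: "(\<lambda>l. s0 + l) ` L t \<subseteq> {..<n-m}" unfolding L_def using m'_le by auto
  have "card ({..<n-m} - (\<lambda>l. s0+l) ` L t) = card {..<n-m} - card ((\<lambda>l. s0+l) ` L t)"
    by (rule card_Diff_subset[OF finite_imageI[OF fL] sub1])
  moreover have "card ((\<lambda>l. s0+l) ` L t) = card (L t)" by (rule card_image) (simp add: inj_on_def)
  ultimately have c1: "card {j. (t,j) \<in> D} = n - m - card (L t)"
    unfolding eq1 by simp
  have c2: "card ((\<lambda>l. n + l) ` L t) = card (L t)" by (simp add: card_image inj_on_def)
  have disj: "{j. (t,j) \<in> D} \<inter> (\<lambda>l. n + l) ` L t = {}" unfolding D_iff by auto
  have f1: "finite {j. (t,j) \<in> D}"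
  proof -
    have "{j. (t,j) \<in> D} \<subseteq> {..<n-m}" unfolding D_iff by auto
    then show ?thesis using finite_subset by blast
  qed
  have "card (Q t) = card {j. (t,j)\<in>D} + card ((\<lambda>l. n+l) ` L t)"
    unfolding Q_def by (rule card_Un_disjoint[OF f1 finite_imageI[OF fL] disj])
  then show ?thesis using c1 c2 cL m'_le by simp
qed

definition CP where "CP l = {..<r - e l} \<union> (\<lambda>k. r + k) ` {..<e l}"

lemma CP_sub: "l < m' \<Longrightarrow> CP l \<subseteq> {..<r + E}"
  using e_le_E[of l] unfolding CP_def by auto

lemma card_CP: assumes "l < m'" shows "card (CP l) = r"
proof -
  have disj: "{..<r - e l} \<inter> (\<lambda>k. r + k) ` {..<e l} = {}" by auto
  have "card (CP l) = card {..<r - e l} + card ((\<lambda>k. r + k) ` {..<e l})"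
    unfolding CP_def by (rule card_Un_disjoint) (use disj in auto)
  also have "\<dots> = r - e l + e l" by (simp add: card_image inj_on_def)
  finally show ?thesis using e_le_r[OF assms] by simp
qed

lemma col_interp: assumes "l < m'"
  shows "\<exists>c\<in>Ccol. (\<forall>k<r - e l. c k = f k) \<and> (\<forall>k<e l. c (r+k) = 0)"
proof -
  obtain v where v: "v \<in> Ccol" "\<forall>p\<in>CP l. v p = (if p < r - e l then f p else 0)"
    using mds_interp[OF Ccol CP_sub[OF assms] card_CP[OF assms], where f="\<lambda>p. if p < r - e l then f p else 0"] by blast
  have "\<forall>k<r - e l. v k = f k" using v(2) unfolding CP_def by auto
  moreover have "\<forall>k<e l. v (r+k) = 0" using v(2) unfolding CP_def by auto
  ultimately show ?thesis using v(1) by blast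
qed

lemma col_unique: assumes "l < m'" "c \<in> Ccol" "c' \<in> Ccol" "\<forall>p\<in>CP l. c p = c' p"
  shows "c = c'"
  using mds_unique[OF Ccol assms(2,3) CP_sub[OF assms(1)]] card_CP[OF assms(1)] assms(4) by simp

lemma col_zero: assumes "l < m'" "c \<in> Ccol" "\<forall>p\<in>CP l. c p = 0"
  shows "c = (\<lambda>_. 0)"
  using mds_zero[OF Ccol assms(2) CP_sub[OF assms(1)]] card_CP[OF assms(1)] assms(3) by simp

end

context stair
begin

definition valid :: "(nat \<times> nat \<Rightarrow> 'a) \<Rightarrow> (nat \<Rightarrow> nat \<Rightarrow> 'a) \<Rightarrow> nat \<Rightarrow> bool" where
  "valid d R i \<longleftrightarrow> R i \<in> Crow \<and> (\<forall>j. (i,j) \<in> D \<longrightarrow> R i j = d (i,j)) \<and>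
     (\<forall>l<m'. r - e l \<le> i \<longrightarrow> (\<forall>c\<in>Ccol. (\<forall>k<r - e l. c k = R k (n+l)) \<and> (\<forall>k<e l. c (r+k) = 0)
        \<longrightarrow> R i (n+l) = c i))"

lemma build: "t \<le> r \<Longrightarrow> \<exists>R. \<forall>i<t. valid d R i"
proof (induction t)
  case 0 show ?case by simp
next
  case (Suc t)
  then obtain R where R: "\<forall>i<t. valid d R i" by auto
  have t: "t < r" using Suc by simp
  have "\<forall>l. \<exists>c. l < m' \<longrightarrow> c \<in> Ccol \<and> (\<forall>k<r - e l. c k = R k (n+l)) \<and> (\<forall>k<e l. c (r+k) = 0)"
  proof
    fix l show "\<exists>c. l < m' \<longrightarrow> c \<in> Ccol \<and> (\<forall>k<r - e l. c k = R k (n+l)) \<and> (\<forall>k<e l. c (r+k) = 0)"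
    proof (cases "l < m'")
      case True
      from col_interp[OF True, where f="\<lambda>k. R k (n+l)"] obtain c where
        "c \<in> Ccol" "(\<forall>k<r - e l. c k = R k (n+l)) \<and> (\<forall>k<e l. c (r+k) = 0)" by blast
      then show ?thesis by blast
    qed simp
  qed
  then obtain cc where cc: "\<And>l. l < m' \<Longrightarrow> cc l \<in> Ccol \<and> (\<forall>k<r - e l. cc l k = R k (n+l)) \<and> (\<forall>k<e l. cc l (r+k) = 0)"
    by metis
  define f where "f j = (if j < n then d (t,j) else cc (j - n) t)" for j
  obtain v where v: "v \<in> Crow" "\<forall>j\<in>Q t. v j = f j"
    using mds_interp[OF Crow Q_sub card_Q[OF t], where f=f] by blast
  define R' where "R' = R(t := v)"
  have old: "\<And>k. k \<noteq> t \<Longrightarrow> R' k = R k" unfolding R'_def by simp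
  have new: "R' t = v" unfolding R'_def by simp
  have "\<forall>i<Suc t. valid d R' i"
  proof (intro allI impI)
    fix i assume "i < Suc t"
    then consider "i < t" | "i = t" by linarith
    then show "valid d R' i"
    proof cases
      case 1
      then have vi: "valid d R i" using R by simp
      have Ri: "R' i = R i" using old 1 by simp
      show ?thesis unfolding valid_def
      proof (intro conjI allI impI ballI)
        show "R' i \<in> Crow" using vi Ri unfolding valid_def by simp
      next
        fix j assume "(i,j) \<in> D" then show "R' i j = d (i,j)" using vi Ri unfolding valid_def by simp
      next
        fix l c assume l: "l < m'" "r - e l \<le> i" and c: "c \<in> Ccol"
          and h: "(\<forall>k<r - e l. c k = R' k (n+l)) \<and> (\<forall>k<e l. c (r+k) = 0)"
        have "\<forall>k<r - e l. c k = R k (n+l)" using h old l 1 by auto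
        then have "R i (n+l) = c i" using vi l c h unfolding valid_def by blast
        then show "R' i (n+l) = c i" using Ri by simp
      qed
    next
      case 2
      show ?thesis unfolding valid_def
      proof (intro conjI allI impI ballI)
        show "R' i \<in> Crow" using v new 2 by simp
      next
        fix j assume "(i,j) \<in> D"
        then have "j \<in> Q t" "j < n" using 2 unfolding Q_def D_iff by auto
        then show "R' i j = d (i,j)" using v new 2 unfolding f_def by simp
      next
        fix l c assume l: "l < m'" "r - e l \<le> i" and c: "c \<in> Ccol"
          and h: "(\<forall>k<r - e l. c k = R' k (n+l)) \<and> (\<forall>k<e l. c (r+k) = 0)"
        have hk: "\<forall>k<r - e l. c k = R k (n+l)" using h old l 2 by auto
        have "\<forall>p\<in>CP l. c p = cc l p" using hk h cc[OF l(1)] unfolding CP_def by auto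
        hence ceq: "c = cc l" using col_unique[OF l(1) c] cc[OF l(1)] by blast
        have "n + l \<in> Q t" using l 2 unfolding Q_def L_def by auto
        then have "v (n+l) = cc l t" using v unfolding f_def by simp
        then show "R' i (n+l) = c i" using new 2 ceq by simp
      qed
    qed
  qed
  then show ?case by blast
qed

lemma Crow_vec: "v \<in> Crow \<Longrightarrow> j \<ge> n + m' \<Longrightarrow> v j = 0"
  using sys_lin[OF Crow] unfolding linear_code_def vecs_def by blast

lemma exists_code: "\<exists>X\<in>stair_code n r m m' e Crow Ccol. \<forall>i j. (i,j) \<in> D \<longrightarrow> X i j = d (i,j)"
proof -
  obtain R where R: "\<forall>i<r. valid d R i" using build by blast
  define X where "X i j = (if i < r \<and> j < n then R i j else 0)" for i j
  define P' where "P' i l = R i (n+l)" for i l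
  have Rin: "\<And>i. i < r \<Longrightarrow> R i \<in> Crow" using R unfolding valid_def by blast
  have rows: "\<forall>i<r. (\<lambda>j. if j < n then X i j else if j < n + m' then P' i (j - n) else 0) \<in> Crow"
  proof (intro allI impI)
    fix i assume i: "i < r"
    have "(\<lambda>j. if j < n then X i j else if j < n + m' then P' i (j - n) else 0) = R i"
    proof (rule ext)
      fix j show "(if j < n then X i j else if j < n + m' then P' i (j - n) else 0) = R i j"
        using Crow_vec[OF Rin[OF i], of j] i unfolding X_def P'_def by auto
    qed
    then show "(\<lambda>j. if j < n then X i j else if j < n + m' then P' i (j - n) else 0) \<in> Crow"
      using Rin[OF i] by simp
  qed
  have cols: "\<forall>l<m'. \<exists>c\<in>Ccol. (\<forall>i<r. c i = P' i l) \<and> (\<forall>k<e l. c (r + k) = 0)"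
  proof (intro allI impI)
    fix l assume l: "l < m'"
    obtain c where c: "c \<in> Ccol" "\<forall>k<r - e l. c k = R k (n+l)" "\<forall>k<e l. c (r+k) = 0"
      using col_interp[OF l, where f="\<lambda>k. R k (n+l)"] by blast
    have "\<forall>i<r. c i = P' i l"
    proof (intro allI impI)
      fix i assume i: "i < r"
      show "c i = P' i l"
      proof (cases "i < r - e l")
        case True then show ?thesis using c unfolding P'_def by simp
      next
        case False
        then have "r - e l \<le> i" by simp
        then show ?thesis using R i l c unfolding valid_def P'_def by metis
      qed
    qed
    then show "\<exists>c\<in>Ccol. (\<forall>i<r. c i = P' i l) \<and> (\<forall>k<e l. c (r + k) = 0)" using c by blast
  qed
  have zero: "\<forall>i j. (r \<le> i \<or> n \<le> j) \<longrightarrow> X i j = 0" unfolding X_def by auto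
  have XS: "X \<in> stair_code n r m m' e Crow Ccol"
    unfolding stair_code_def using zero rows cols by blast
  have "\<forall>i j. (i,j) \<in> D \<longrightarrow> X i j = d (i,j)"
  proof (intro allI impI)
    fix i j assume ij: "(i,j) \<in> D"
    then have "i < r" "j < n" unfolding D_iff by auto
    then show "X i j = d (i,j)" using R ij unfolding X_def valid_def by auto
  qed
  then show ?thesis using XS by blast
qed

end

locale stairX = stair n r m m' e Crow Ccol
  for n r m m' :: nat and e :: "nat \<Rightarrow> nat" and Crow Ccol :: "(nat \<Rightarrow> 'a::{field,finite}) set" +
  fixes R :: "nat \<Rightarrow> nat \<Rightarrow> 'a" and cc :: "nat \<Rightarrow> nat \<Rightarrow> 'a" and g :: "nat \<Rightarrow> nat \<Rightarrow> 'a"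
  assumes R_in: "\<And>i. i < r \<Longrightarrow> R i \<in> Crow"
    and cc_in: "\<And>l. l < m' \<Longrightarrow> cc l \<in> Ccol"
    and cc_top: "\<And>l i. l < m' \<Longrightarrow> i < r \<Longrightarrow> cc l i = R i (n+l)"
    and cc_bot: "\<And>l k. l < m' \<Longrightarrow> k < e l \<Longrightarrow> cc l (r+k) = 0"
    and g_in: "\<And>i. i < r \<Longrightarrow> g i \<in> Ccol"
    and g_top: "\<And>i t. i < r \<Longrightarrow> t < r \<Longrightarrow> g i t = (if t = i then 1 else 0)"
begin

definition u where "u j = (\<lambda>t. \<Sum>i<r. R i j * g i t)"
definition V where "V k = (\<lambda>j. \<Sum>i<r. g i (r+k) * R i j)"

lemma u_in: "u j \<in> Ccol"
  unfolding u_def by (rule lin_comb[OF sys_lin[OF Ccol]]) (auto intro: g_in)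

lemma u_top: assumes "t < r" shows "u j t = R t j"
proof -
  have "(\<Sum>i<r. R i j * g i t) = (\<Sum>i<r. if i = t then R i j else 0)"
    by (rule sum.cong) (auto simp: g_top assms)
  then show ?thesis unfolding u_def using assms by simp
qed

lemma u_cc: assumes "l < m'" shows "u (n+l) = cc l"
proof (rule mds_unique[OF Ccol u_in cc_in[OF assms], of "{..<r}"])
  show "{..<r} \<subseteq> {..<r + E}" by auto
  show "r \<le> card {..<r}" by simp
  show "\<forall>p\<in>{..<r}. u (n + l) p = cc l p" using u_top cc_top[OF assms] by simp
qed

lemma V_in: "V k \<in> Crow"
  unfolding V_def by (rule lin_comb[OF sys_lin[OF Crow]]) (auto intro: R_in)

lemma V_u: "V k j = u j (r+k)"
  unfolding V_def u_def by (simp add: mult.commute)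

lemma V_P: "l < m' \<Longrightarrow> k < e l \<Longrightarrow> V k (n+l) = 0"
  using V_u u_cc cc_bot by simp

lemma Vzero: assumes l1: "l1 < m'" and z: "\<forall>j<s0+l1. \<forall>i<r. R i j = 0" and k: "k < e l1"
  shows "V k = (\<lambda>_. 0)"
proof -
  define P where "P = {..<s0+l1} \<union> (\<lambda>l. n+l) ` {l1..<m'}"
  have Psub: "P \<subseteq> {..<n+m'}" unfolding P_def using mm_le l1 by auto
  have disj: "{..<s0+l1} \<inter> (\<lambda>l. n+l) ` {l1..<m'} = {}" using mm_le l1 by auto
  have "card P = card {..<s0+l1} + card ((\<lambda>l. n+l) ` {l1..<m'})"
    unfolding P_def by (rule card_Un_disjoint) (use disj in auto)
  also have "\<dots> = s0 + l1 + (m' - l1)" by (simp add: card_image inj_on_def)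
  also have "\<dots> = n - m" using mm_le l1 by simp
  finally have cP: "card P = n - m" .
  have "\<forall>p\<in>P. V k p = 0"
  proof
    fix p assume pP: "p \<in> P"
    show "V k p = 0"
    proof (cases "p < s0 + l1")
      case True then show ?thesis unfolding V_def using z by simp
    next
      case False
      then obtain l where 2: "l \<in> {l1..<m'}" "p = n + l" using pP unfolding P_def by blast
      have "e l1 \<le> e l" using e_mono 2 by simp
      then show ?thesis using V_P[of l] k 2 by simp
    qed
  qed
  then show ?thesis using mds_zero[OF Crow V_in Psub] cP by simp
qed

lemma colV: assumes l: "l < m'" and top: "\<forall>i<r - e l. R i (s0+l) = 0"
    and bot: "\<forall>k<e l. V k (s0+l) = 0"
  shows "\<forall>i<r. R i (s0+l) = 0"
proof -
  have "\<forall>p\<in>CP l. u (s0+l) p = 0"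
  proof
    fix p assume "p \<in> CP l"
    then consider "p < r - e l" | k where "k < e l" "p = r + k" unfolding CP_def by auto
    then show "u (s0+l) p = 0"
    proof cases
      case 1 then have "p < r" by linarith
      then show ?thesis using u_top top 1 by simp
    next
      case 2 then show ?thesis using V_u bot by simp
    qed
  qed
  then have "u (s0+l) = (\<lambda>_. 0)" using col_zero[OF l u_in] by simp
  then show ?thesis using u_top by (metis)
qed

lemma colzero: assumes l1: "l1 \<le> m'" and z: "\<forall>i j. (i,j) \<in> D \<longrightarrow> j < s0 + l1 \<longrightarrow> R i j = 0"
  shows "\<forall>j<s0+l1. \<forall>i<r. R i j = 0"
proof -
  have "\<forall>i<r. R i j = 0" if "j < s0 + l1" for j
    using that
  proof (induction j rule: less_induct)
    case (less j)
    show ?case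
    proof (cases "j < s0")
      case True then show ?thesis using z pure_col_D less.prems by blast
    next
      case False
      define l where "l = j - s0"
      have j: "j = s0 + l" using False unfolding l_def by simp
      have l: "l < l1" "l < m'" using j less.prems l1 by linarith+
      have IH: "\<forall>j'<s0+l. \<forall>i<r. R i j' = 0" using less.IH j less.prems by simp
      have "\<forall>k<e l. V k (s0+l) = 0" using Vzero[OF l(2) IH] by simp
      moreover have "\<forall>i<r - e l. R i (s0+l) = 0" using z stair_col_D[OF l(2)] j l by auto
      ultimately show ?thesis using colV[OF l(2)] j by simp
    qed
  qed
  then show ?thesis by blast
qed

lemma colmain: assumes "l1 \<le> l0" "l0 < m'" "e l0 \<le> e l1"
    and z: "\<forall>i j. (i,j) \<in> D \<longrightarrow> (j < s0 + l1 \<or> j = s0 + l0) \<longrightarrow> R i j = 0"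
  shows "\<forall>i<r. R i (s0+l0) = 0"
proof -
  have l1: "l1 < m'" using assms by linarith
  have cz: "\<forall>j<s0+l1. \<forall>i<r. R i j = 0" using colzero[of l1] l1 z by auto
  have "\<forall>k<e l0. V k (s0+l0) = 0" using Vzero[OF l1 cz] assms(3) by simp
  moreover have "\<forall>i<r - e l0. R i (s0+l0) = 0" using z stair_col_D[OF assms(2)] by auto
  ultimately show ?thesis using colV[OF assms(2)] by simp
qed

lemma rowstep: assumes t: "t < r" and dz: "\<forall>j. (t,j) \<in> D \<longrightarrow> R t j = 0"
    and up: "\<forall>l<m'. r - e l \<le> t \<longrightarrow> (\<forall>k<r - e l. R k (n+l) = 0)"
  shows "R t = (\<lambda>_. 0)"
proof -
  have stz: "R t (n+l) = 0" if l: "l < m'" "r - e l \<le> t" for l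
  proof -
    have "\<forall>p\<in>CP l. cc l p = 0"
    proof
      fix p assume "p \<in> CP l"
      then consider "p < r - e l" | k where "k < e l" "p = r + k" unfolding CP_def by auto
      then show "cc l p = 0"
      proof cases
        case 1 then have "p < r" by linarith
        then show ?thesis using cc_top[OF l(1)] up l 1 by simp
      next
        case 2 then show ?thesis using cc_bot[OF l(1)] by simp
      qed
    qed
    then have "cc l = (\<lambda>_. 0)" using col_zero[OF l(1) cc_in[OF l(1)]] by simp
    then show ?thesis using cc_top[OF l(1) t] by (metis)
  qed
  have "\<forall>p\<in>Q t. R t p = 0"
  proof
    fix p assume "p \<in> Q t"
    then consider "(t,p) \<in> D" | l where "l < m'" "r - e l \<le> t" "p = n + l" unfolding Q_def L_def by auto
    then show "R t p = 0"
    proof cases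
      case 1 then show ?thesis using dz by simp
    next
      case 2 then show ?thesis using stz by simp
    qed
  qed
  then show ?thesis using mds_zero[OF Crow R_in[OF t] Q_sub[of t]] card_Q[OF t] by simp
qed

lemma rowzero: assumes "t \<le> r" and z: "\<forall>i j. (i,j) \<in> D \<longrightarrow> i < t \<longrightarrow> R i j = 0"
  shows "\<forall>i<t. R i = (\<lambda>_. 0)"
proof -
  have "R i = (\<lambda>_. 0)" if "i < t" for i
    using that
  proof (induction i rule: less_induct)
    case (less i)
    have ir: "i < r" using less.prems assms(1) by simp
    show ?case
    proof (rule rowstep[OF ir])
      show "\<forall>j. (i,j) \<in> D \<longrightarrow> R i j = 0" using z less.prems by blast
      show "\<forall>l<m'. r - e l \<le> i \<longrightarrow> (\<forall>k<r - e l. R k (n+l) = 0)"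
      proof (intro allI impI)
        fix l k assume "l < m'" "r - e l \<le> i" "k < r - e l"
        then have "k < i" by linarith
        then have "R k = (\<lambda>_. 0)" using less.IH less.prems by simp
        then show "R k (n+l) = 0" by simp
      qed
    qed
  qed
  then show ?thesis by blast
qed

end

context stair
begin

lemma stair_self: "stair n r m m' e Crow Ccol"
  apply (rule stair.intro)
  apply (rule m'_pos)
  apply (rule m'_le)
  apply (erule (1) e_mono)
  apply (rule e_le)
  apply (rule Crow)
  apply (rule Ccol)
  done

lemma D_jn: "(i,j) \<in> D \<Longrightarrow> j < n"
  unfolding D_iff by auto

lemma g_exists:
  obtains g where "\<And>i. i < r \<Longrightarrow> g i \<in> Ccol" "\<And>i t. i < r \<Longrightarrow> t < r \<Longrightarrow> g i t = (if t = i then 1 else 0)"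
proof -
  have bij: "bij_betw (trunc r) Ccol (vecs r)" using Ccol unfolding sys_MDS_code_def systematic_code_def by blast
  have ex: "\<forall>i. \<exists>v. i < r \<longrightarrow> v \<in> Ccol \<and> (\<forall>t<r. v t = (if t = i then 1 else 0))"
  proof
    fix i show "\<exists>v. i < r \<longrightarrow> v \<in> Ccol \<and> (\<forall>t<r. v t = (if t = i then 1 else 0))"
    proof (cases "i < r")
      case True
      have "(\<lambda>t. if t = i then 1 else 0 :: 'a) \<in> vecs r" unfolding vecs_def using True by auto
      then have "(\<lambda>t. if t = i then 1 else 0 :: 'a) \<in> trunc r ` Ccol" using bij unfolding bij_betw_def by simp
      then obtain v where v: "v \<in> Ccol" "(\<lambda>t. if t = i then 1 else 0 :: 'a) = trunc r v" by (rule imageE)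
      have "\<forall>t<r. v t = (if t = i then 1 else 0)"
      proof (intro allI impI)
        fix t assume "t < r"
        have "(if t = i then 1 else 0 :: 'a) = trunc r v t" using v(2) by (rule fun_cong)
        then show "v t = (if t = i then 1 else 0)" using \<open>t < r\<close> unfolding trunc_def by simp
      qed
      then show ?thesis using v(1) by blast
    qed simp
  qed
  obtain g where g: "\<forall>i. i < r \<longrightarrow> g i \<in> Ccol \<and> (\<forall>t<r. g i t = (if t = i then 1 else 0))"
    using choice[OF ex] by blast
  show ?thesis by (rule that[of g]) (use g in auto)
qed

lemma S_obtain:
  assumes "X \<in> stair_code n r m m' e Crow Ccol"
  obtains R cc where "\<And>i. i < r \<Longrightarrow> R i \<in> Crow" "\<And>i j. j < n \<Longrightarrow> R i j = X i j"
    "\<And>l. l < m' \<Longrightarrow> cc l \<in> Ccol" "\<And>l i. l < m' \<Longrightarrow> i < r \<Longrightarrow> cc l i = R i (n+l)"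
    "\<And>l k. l < m' \<Longrightarrow> k < e l \<Longrightarrow> cc l (r+k) = 0"
proof -
  obtain P' where rows: "\<forall>i<r. (\<lambda>j. if j < n then X i j else if j < n + m' then P' i (j - n) else 0) \<in> Crow"
    and cols: "\<forall>l<m'. \<exists>c\<in>Ccol. (\<forall>i<r. c i = P' i l) \<and> (\<forall>k<e l. c (r + k) = 0)"
    using assms unfolding stair_code_def by blast
  define R where "R i = (\<lambda>j. if j < n then X i j else if j < n + m' then P' i (j - n) else 0)" for i
  have ex: "\<forall>l. \<exists>c. l < m' \<longrightarrow> c \<in> Ccol \<and> (\<forall>i<r. c i = P' i l) \<and> (\<forall>k<e l. c (r + k) = 0)"
    using cols by blast
  obtain cc where cc: "\<forall>l. l < m' \<longrightarrow> cc l \<in> Ccol \<and> (\<forall>i<r. cc l i = P' i l) \<and> (\<forall>k<e l. cc l (r + k) = 0)"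
    using choice[OF ex] by blast
  have RP: "R i (n+l) = P' i l" if "l < m'" for i l using that unfolding R_def by simp
  show ?thesis
  proof (rule that[of R cc])
    show "\<And>i. i < r \<Longrightarrow> R i \<in> Crow" using rows unfolding R_def by blast
    show "\<And>i j. j < n \<Longrightarrow> R i j = X i j" unfolding R_def by simp
    show "\<And>l. l < m' \<Longrightarrow> cc l \<in> Ccol" using cc by blast
    show "\<And>l i. l < m' \<Longrightarrow> i < r \<Longrightarrow> cc l i = R i (n+l)" using cc RP by simp
    show "\<And>l k. l < m' \<Longrightarrow> k < e l \<Longrightarrow> cc l (r+k) = 0" using cc by blast
  qed
qed

lemma interpX:
  assumes "X \<in> stair_code n r m m' e Crow Ccol"
  obtains R cc g where "stairX n r m m' e Crow Ccol R cc g" "\<And>i j. j < n \<Longrightarrow> R i j = X i j"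
proof -
  have ex: "\<exists>R cc. (\<forall>i. i < r \<longrightarrow> R i \<in> Crow) \<and> (\<forall>i j. j < n \<longrightarrow> R i j = X i j) \<and>
    (\<forall>l. l < m' \<longrightarrow> cc l \<in> Ccol) \<and> (\<forall>l i. l < m' \<longrightarrow> i < r \<longrightarrow> cc l i = R i (n+l)) \<and>
    (\<forall>l k. l < m' \<longrightarrow> k < e l \<longrightarrow> cc l (r+k) = 0)"
  proof (rule S_obtain[OF assms])
    fix R cc assume "\<And>i. i < r \<Longrightarrow> R i \<in> Crow" "\<And>i j. j < n \<Longrightarrow> R i j = X i j"
      "\<And>l. l < m' \<Longrightarrow> cc l \<in> Ccol" "\<And>l i. l < m' \<Longrightarrow> i < r \<Longrightarrow> cc l i = R i (n+l)"
      "\<And>l k. l < m' \<Longrightarrow> k < e l \<Longrightarrow> cc l (r+k) = 0"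
    then show ?thesis by blast
  qed
  then obtain R cc where R: "\<forall>i. i < r \<longrightarrow> R i \<in> Crow" "\<forall>i j. j < n \<longrightarrow> R i j = X i j"
    "\<forall>l. l < m' \<longrightarrow> cc l \<in> Ccol" "\<forall>l i. l < m' \<longrightarrow> i < r \<longrightarrow> cc l i = R i (n+l)"
    "\<forall>l k. l < m' \<longrightarrow> k < e l \<longrightarrow> cc l (r+k) = 0" by blast
  have ex2: "\<exists>g. (\<forall>i. i < r \<longrightarrow> g i \<in> Ccol) \<and> (\<forall>i t. i < r \<longrightarrow> t < r \<longrightarrow> g i t = (if t = i then 1 else 0))"
  proof (rule g_exists)
    fix g assume "\<And>i. i < r \<Longrightarrow> g i \<in> Ccol" "\<And>i t. i < r \<Longrightarrow> t < r \<Longrightarrow> g i t = (if t = i then 1 else 0)"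
    then show ?thesis by blast
  qed
  then obtain g where g: "\<forall>i. i < r \<longrightarrow> g i \<in> Ccol" "\<forall>i t. i < r \<longrightarrow> t < r \<longrightarrow> g i t = (if t = i then 1 else 0)"
    by blast
  have "stairX n r m m' e Crow Ccol R cc g"
    by (rule stairX.intro[OF stair_self], rule stairX_axioms.intro) (use R g in auto)
  then show ?thesis using that R(2) by simp
qed

lemma zero_below:
  assumes XS: "X \<in> stair_code n r m m' e Crow Ccol" and t: "t \<le> r"
    and z: "\<forall>i j. (i,j) \<in> D \<longrightarrow> i < t \<longrightarrow> X i j = 0" and ij: "i < t" "j < n"
  shows "X i j = 0"
proof -
  obtain R cc g where SX: "stairX n r m m' e Crow Ccol R cc g" and RX: "\<And>i j. j < n \<Longrightarrow> R i j = X i j"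
    using interpX[OF XS] by blast
  interpret SX: stairX n r m m' e Crow Ccol R cc g by (rule SX)
  have "\<forall>i j. (i,j) \<in> D \<longrightarrow> i < t \<longrightarrow> R i j = 0" using z RX D_jn by simp
  then have "\<forall>i<t. R i = (\<lambda>_. 0)" using SX.rowzero t by blast
  then have "R i j = 0" using ij by simp
  then show ?thesis using RX ij by simp
qed

lemma riser_set:
  assumes "i < i0" "i0 < r" "row_par n r m m' e i = row_par n r m m' e i0" "l < m'" "r - e l \<le> i0"
  shows "r - e l \<le> i"
proof -
  define A where "A t = {j. j < n \<and> r - t \<le> par_height n r m m' e j}" for t
  have sub: "A i \<subseteq> A i0" unfolding A_def using assms(1) by auto
  have fin: "finite (A i0)" unfolding A_def by simp
  have "card (A i) = card (A i0)" using assms(3) unfolding A_def row_par_def by simp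
  hence eq: "A i = A i0" using card_subset_eq[OF fin sub] by simp
  have ph: "par_height n r m m' e (s0 + l) = e l" unfolding par_height_def using assms(4) mm_le by auto
  have "s0 + l \<in> A i0" unfolding A_def using ph assms mm_le by auto
  hence "s0 + l \<in> A i" using eq by simp
  hence "r - i \<le> e l" unfolding A_def using ph by simp
  thus ?thesis by linarith
qed

lemma zero_riser:
  assumes XS: "X \<in> stair_code n r m m' e Crow Ccol" and ii: "i < i0" "i0 < r"
    and rp: "row_par n r m m' e i = row_par n r m m' e i0"
    and z: "\<forall>a b. (a,b) \<in> D \<longrightarrow> a \<noteq> i \<longrightarrow> X a b = 0" and j: "j < n"
  shows "X i0 j = 0"
proof -
  obtain R cc g where SX: "stairX n r m m' e Crow Ccol R cc g" and RX: "\<And>i j. j < n \<Longrightarrow> R i j = X i j"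
    using interpX[OF XS] by blast
  interpret SX: stairX n r m m' e Crow Ccol R cc g by (rule SX)
  have zR: "\<forall>a b. (a,b) \<in> D \<longrightarrow> a \<noteq> i \<longrightarrow> R a b = 0" using z RX D_jn by simp
  have below: "\<forall>a<i. R a = (\<lambda>_. 0)"
    using SX.rowzero[of i] zR ii by auto
  have "R i0 = (\<lambda>_. 0)"
  proof (rule SX.rowstep[OF ii(2)])
    show "\<forall>j. (i0,j) \<in> D \<longrightarrow> R i0 j = 0" using zR ii by auto
    show "\<forall>l<m'. r - e l \<le> i0 \<longrightarrow> (\<forall>k<r - e l. R k (n+l) = 0)"
    proof (intro allI impI)
      fix l k assume l: "l < m'" "r - e l \<le> i0" and k: "k < r - e l"
      have "r - e l \<le> i" using riser_set[OF ii rp l] .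
      then have "k < i" using k by linarith
      then show "R k (n+l) = 0" using below by simp
    qed
  qed
  then show ?thesis using RX j by (metis)
qed

lemma zero_col:
  assumes XS: "X \<in> stair_code n r m m' e Crow Ccol" and l: "l1 \<le> l0" "l0 < m'" "e l0 \<le> e l1"
    and z: "\<forall>a b. (a,b) \<in> D \<longrightarrow> (b < s0 + l1 \<or> b = s0 + l0) \<longrightarrow> X a b = 0" and a: "a < r"
  shows "X a (s0 + l0) = 0"
proof -
  obtain R cc g where SX: "stairX n r m m' e Crow Ccol R cc g" and RX: "\<And>i j. j < n \<Longrightarrow> R i j = X i j"
    using interpX[OF XS] by blast
  interpret SX: stairX n r m m' e Crow Ccol R cc g by (rule SX)
  have zR: "\<forall>a b. (a,b) \<in> D \<longrightarrow> (b < s0 + l1 \<or> b = s0 + l0) \<longrightarrow> R a b = 0" using z RX D_jn by simp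
  have "R a (s0 + l0) = 0" using SX.colmain[OF l zR] a by simp
  moreover have "s0 + l0 < n" using l mm_le by linarith
  ultimately show ?thesis using RX by metis
qed

end

theorem mainTheorem4:
  fixes n r m m' w i0 j0 :: nat
    and e :: "nat \<Rightarrow> nat"
    and Crow Ccol :: "(nat \<Rightarrow> 'a::{field,finite}) set"
    and c :: "nat \<times> nat \<Rightarrow> 'a"
  assumes "1 \<le> m" and "m < n" and "1 \<le> m'" and "m' \<le> n - m"
    and "0 < e 0"
    and "\<And>l1 l2. l1 \<le> l2 \<Longrightarrow> l2 < m' \<Longrightarrow> e l1 \<le> e l2"
    and "e (m' - 1) \<le> r"
    and "card (UNIV :: 'a set) = 2 ^ w"
    and "n + m' \<le> 2 ^ w" and "r + e (m' - 1) \<le> 2 ^ w"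
    and "sys_MDS_code (n + m') (n - m) Crow"
    and "sys_MDS_code (r + e (m' - 1)) r Ccol"
    and "i0 < r" and "j0 < n"
    and "(i0, j0) \<in> stair_pos n r m m' e \<or> n - m \<le> j0"
    and "\<forall>X \<in> stair_code n r m m' e Crow Ccol.
           X i0 j0 = (\<Sum>(i, j) \<in> data_pos n r m m' e. c (i, j) * X i j)"
  shows "(\<forall>(i, j) \<in> data_pos n r m m' e. c (i, j) \<noteq> 0 \<longrightarrow> i \<le> i0 \<and> j \<le> j0)
       \<and> (\<forall>(i, j) \<in> data_pos n r m m' e.
            j \<noteq> j0 \<and> par_height n r m m' e j = par_height n r m m' e j0 \<longrightarrow> c (i, j) = 0)
       \<and> (\<forall>(i, j) \<in> data_pos n r m m' e.
            i \<noteq> i0 \<and> row_par n r m m' e i = row_par n r m m' e i0 \<longrightarrow> c (i, j) = 0)"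
proof -
  note A = assms
  interpret stair n r m m' e Crow Ccol
    apply (rule stair.intro)
    apply (rule A(3))
    apply (rule A(4))
    apply (erule (1) A(6))
    apply (rule A(7))
    apply (rule A(11))
    apply (rule A(12))
    done
  let ?D = "data_pos n r m m' e"
  let ?S = "stair_code n r m m' e Crow Ccol"
  have r0: "0 < r" using A(13) by simp
  have key: "\<exists>X\<in>?S. (\<forall>i j. (i,j) \<in> ?D \<longrightarrow> X i j = (if (i,j) = (a,b) then 1 else 0)) \<and> c (a,b) = X i0 j0"
    if ab: "(a,b) \<in> ?D" for a b
  proof -
    obtain X where XS: "X \<in> ?S" and Xd: "\<forall>i j. (i,j) \<in> ?D \<longrightarrow> X i j = (\<lambda>q. if q = (a,b) then 1 else 0) (i,j)"
      using exists_code[where d="\<lambda>q. if q = (a,b) then 1 else 0"] by blast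
    have "X i0 j0 = (\<Sum>(i, j) \<in> ?D. c (i, j) * X i j)" using A(16) XS by blast
    also have "\<dots> = (\<Sum>q\<in>?D. if q = (a,b) then c q else 0)"
    proof (rule sum.cong[OF refl])
      fix q assume "q \<in> ?D"
      then show "(case q of (i, j) \<Rightarrow> c (i, j) * X i j) = (if q = (a,b) then c q else 0)"
        using Xd by (cases q) simp
    qed
    also have "\<dots> = c (a,b)" using D_fin ab by simp
    finally have "X i0 j0 = c (a,b)" .
    moreover have "\<forall>i j. (i,j) \<in> ?D \<longrightarrow> X i j = (if (i,j) = (a,b) then 1 else 0)" using Xd by simp
    ultimately show ?thesis using XS by (intro bexI[of _ X]) simp_all
  qed
  have C1: "c (a,b) = 0" if ab: "(a,b) \<in> ?D" and lt: "i0 < a" for a b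
  proof -
    obtain X where XS: "X \<in> ?S" and Xd: "\<forall>i j. (i,j) \<in> ?D \<longrightarrow> X i j = (if (i,j) = (a,b) then 1 else 0)"
      and cX: "c (a,b) = X i0 j0" using key[OF ab] by blast
    have "X i0 j0 = 0"
    proof (rule zero_below[OF XS, of "Suc i0"])
      show "Suc i0 \<le> r" using A(13) by simp
      show "\<forall>i j. (i,j) \<in> ?D \<longrightarrow> i < Suc i0 \<longrightarrow> X i j = 0" using Xd lt by auto
    qed (use A(14) in simp_all)
    then show ?thesis using cX by simp
  qed
  have j0st: "\<exists>l0<m'. j0 = n - m - m' + l0 \<and> r - e l0 \<le> i0" if "j0 < n - m"
    using A(15) that unfolding stair_pos_def by auto
  have C2: "c (a,b) = 0" if ab: "(a,b) \<in> ?D" and lt: "j0 < b" for a b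
  proof -
    obtain X where XS: "X \<in> ?S" and Xd: "\<forall>i j. (i,j) \<in> ?D \<longrightarrow> X i j = (if (i,j) = (a,b) then 1 else 0)"
      and cX: "c (a,b) = X i0 j0" using key[OF ab] by blast
    have "b < n - m" using ab unfolding D_iff by simp
    then obtain l0 where l0: "l0 < m'" "j0 = n - m - m' + l0" using j0st lt by auto
    have "X i0 (n - m - m' + l0) = 0"
    proof (rule zero_col[OF XS order.refl l0(1) order.refl _ A(13)])
      show "\<forall>a' b'. (a',b') \<in> ?D \<longrightarrow> (b' < n - m - m' + l0 \<or> b' = n - m - m' + l0) \<longrightarrow> X a' b' = 0"
        using Xd lt l0(2) by auto
    qed
    then show ?thesis using cX l0 by simp
  qed
  have C3: "c (a,b) = 0" if ab: "(a,b) \<in> ?D" and ne: "b \<noteq> j0"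
    and ph: "par_height n r m m' e b = par_height n r m m' e j0" for a b
  proof (cases "j0 < b")
    case True then show ?thesis using C2 ab by blast
  next
    case False
    then have lt: "b < j0" using ne by simp
    have bnm: "b < n - m" using ab unfolding D_iff by simp
    have ntr: "\<not> (\<exists>l<m'. b = n - m - m' + l \<and> r - e l \<le> a)" using ab unfolding D_iff by simp
    have j0nm: "j0 < n - m"
    proof (rule ccontr)
      assume "\<not> j0 < n - m"
      moreover then have "\<not> j0 < n - m - m'" by linarith
      ultimately have "par_height n r m m' e j0 = r" unfolding par_height_def by simp
      show False
      proof (cases "b < n - m - m'")
        case True
        then have "par_height n r m m' e b = 0" unfolding par_height_def by simp
        then show False using ph \<open>par_height n r m m' e j0 = r\<close> r0 by simp
      next
        case False
        define l where "l = b - (n - m - m')"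
        have bl: "b = n - m - m' + l" using False unfolding l_def by simp
        have l: "l < m'" using bl bnm by linarith
        have "par_height n r m m' e b = e l" unfolding par_height_def using False bnm l_def by simp
        then have "e l = r" using ph \<open>par_height n r m m' e j0 = r\<close> by simp
        then show False using ntr bl l by auto
      qed
    qed
    obtain l0 where l0: "l0 < m'" "j0 = n - m - m' + l0" using j0st[OF j0nm] by auto
    have phj0: "par_height n r m m' e j0 = e l0" unfolding par_height_def using l0 j0nm by simp
    have e0: "0 < e l0" using A(5) A(6)[of 0 l0] l0(1) by simp
    have bs: "\<not> b < n - m - m'"
    proof
      assume "b < n - m - m'"
      then have "par_height n r m m' e b = 0" unfolding par_height_def by simp
      then show False using ph phj0 e0 by simp
    qed
    define l where "l = b - (n - m - m')"
    have bl: "b = n - m - m' + l" using bs unfolding l_def by simp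
    have ll0: "l \<le> l0" using bl l0(2) lt by linarith
    have "par_height n r m m' e b = e l" unfolding par_height_def using bs bnm l_def by simp
    then have el: "e l0 \<le> e l" using ph phj0 by simp
    obtain X where XS: "X \<in> ?S" and Xd: "\<forall>i j. (i,j) \<in> ?D \<longrightarrow> X i j = (if (i,j) = (a,b) then 1 else 0)"
      and cX: "c (a,b) = X i0 j0" using key[OF ab] by blast
    have "X i0 (n - m - m' + l0) = 0"
    proof (rule zero_col[OF XS ll0 l0(1) el _ A(13)])
      show "\<forall>a' b'. (a',b') \<in> ?D \<longrightarrow> (b' < n - m - m' + l \<or> b' = n - m - m' + l0) \<longrightarrow> X a' b' = 0"
        using Xd bl l0(2) ne by auto
    qed
    then show ?thesis using cX l0 by simp
  qed
  have C4: "c (a,b) = 0" if ab: "(a,b) \<in> ?D" and ne: "a \<noteq> i0"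
    and rp: "row_par n r m m' e a = row_par n r m m' e i0" for a b
  proof (cases "i0 < a")
    case True then show ?thesis using C1 ab by blast
  next
    case False
    then have lt: "a < i0" using ne by simp
    obtain X where XS: "X \<in> ?S" and Xd: "\<forall>i j. (i,j) \<in> ?D \<longrightarrow> X i j = (if (i,j) = (a,b) then 1 else 0)"
      and cX: "c (a,b) = X i0 j0" using key[OF ab] by blast
    have "X i0 j0 = 0"
    proof (rule zero_riser[OF XS lt A(13) rp _ A(14)])
      show "\<forall>a' b'. (a',b') \<in> ?D \<longrightarrow> a' \<noteq> a \<longrightarrow> X a' b' = 0" using Xd by auto
    qed
    then show ?thesis using cX by simp
  qed
  show ?thesis
  proof (intro conjI)
    show "\<forall>(i, j) \<in> ?D. c (i, j) \<noteq> 0 \<longrightarrow> i \<le> i0 \<and> j \<le> j0"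
    proof (clarify)
      fix i j assume ij: "(i,j) \<in> ?D" and cz: "c (i,j) \<noteq> 0"
      show "i \<le> i0 \<and> j \<le> j0"
      proof
        show "i \<le> i0" using C1[OF ij] cz by (meson not_le)
        show "j \<le> j0" using C2[OF ij] cz by (meson not_le)
      qed
    qed
    show "\<forall>(i, j) \<in> ?D. j \<noteq> j0 \<and> par_height n r m m' e j = par_height n r m m' e j0 \<longrightarrow> c (i, j) = 0"
      using C3 by blast
    show "\<forall>(i, j) \<in> ?D. i \<noteq> i0 \<and> row_par n r m m' e i = row_par n r m m' e i0 \<longrightarrow> c (i, j) = 0"
      using C4 by blast
  qed
qed

end
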